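(* For any finite $m$, a solitary wave (travelling wave, soliton-like) solution $u=u(\xi)$, $\xi=x+\mu t$, of the equation \[ \tau u_{tt}+uu_x+u_t-\kappa u_{xx}+\gamma u (u^2-z_0^2)=0 \] cannot be written in the form \[ u(\xi)=\frac{\sum_{k=1}^{m}a_k \exp{[k\alpha\xi]}}{1+\sum_{r=1}^{m+1}b_r \exp{[r\alpha\xi]}}, \] with constant coefficients $a_k$, $b_r$ and constant $\alpha$.
   Context: Here $\tau,\kappa,\gamma,z_0$ are constants (the generalized Burgers equation). Substituting $u=U(x+\mu t)$ gives the ODE $h U''+U'(\mu+U)+\gamma U(U^2-z_0^2)=0$ with $h=\tau\mu^2-\kappa$; the scaling $\bar U=U/z_0$, $T=\sqrt{\gamma z_0^2/h}\,\xi$ yields $\bar U''+A\bar U'(\bar\mu+\bar U)+\bar U(\bar U^2-1)=0$ with $A=1/\sqrt{h\gamma^2}$, $\bar\mu=\mu/z_0$. A solitary wave corresponds to a homoclinic trajectory bi-asymptotic to the origin of the associated planar system; the proposed representation has the proper asymptotics as $\xi\to\pm\infty$. *)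

theory Defs
  imports "HOL-Analysis.Analysis"
begin

definition gen_burgers_pde ::
  "real \<Rightarrow> real \<Rightarrow> real \<Rightarrow> real \<Rightarrow> (real \<Rightarrow> real \<Rightarrow> real) \<Rightarrow> bool" where
  "gen_burgers_pde \<tau> \<kappa> \<gamma> z0 u \<longleftrightarrow>
     (\<forall>x t.
        \<tau> * deriv (\<lambda>s. deriv (\<lambda>r. u x r) s) t
      + u x t * deriv (\<lambda>y. u y t) x
      + deriv (\<lambda>s. u x s) t
      - \<kappa> * deriv (\<lambda>y. deriv (\<lambda>z. u z t) y) x
      + \<gamma> * u x t * ((u x t)\<^sup>2 - z0\<^sup>2) = 0)"

definition travelling_wave_solution ::
  "real \<Rightarrow> real \<Rightarrow> real \<Rightarrow> real \<Rightarrow> real \<Rightarrow> (real \<Rightarrow> real) \<Rightarrow> bool" where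
  "travelling_wave_solution \<tau> \<kappa> \<gamma> z0 \<mu> U \<longleftrightarrow>
     (\<forall>\<xi>. U differentiable (at \<xi>)) \<and>
     (\<forall>\<xi>. (deriv U) differentiable (at \<xi>)) \<and>
     gen_burgers_pde \<tau> \<kappa> \<gamma> z0 (\<lambda>x t. U (x + \<mu> * t))"

definition solitary_wave ::
  "real \<Rightarrow> real \<Rightarrow> real \<Rightarrow> real \<Rightarrow> real \<Rightarrow> (real \<Rightarrow> real) \<Rightarrow> bool" where
  "solitary_wave \<tau> \<kappa> \<gamma> z0 \<mu> U \<longleftrightarrow>
     travelling_wave_solution \<tau> \<kappa> \<gamma> z0 \<mu> U \<and>
     (U \<longlongrightarrow> 0) at_top \<and> (U \<longlongrightarrow> 0) at_bot \<and>
     (deriv U \<longlongrightarrow> 0) at_top \<and> (deriv U \<longlongrightarrow> 0) at_bot \<and>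
     (\<exists>\<xi>. U \<xi> \<noteq> 0)"

definition rational_exp_form :: "nat \<Rightarrow> (real \<Rightarrow> real) \<Rightarrow> bool" where
  "rational_exp_form m U \<longleftrightarrow>
     (\<exists>(a::nat \<Rightarrow> real) (b::nat \<Rightarrow> real) (\<alpha>::real). \<forall>\<xi>.
        1 + (\<Sum>r=1..m+1. b r * exp (real r * \<alpha> * \<xi>)) \<noteq> 0 \<and>
        U \<xi> = (\<Sum>k=1..m. a k * exp (real k * \<alpha> * \<xi>)) /
               (1 + (\<Sum>r=1..m+1. b r * exp (real r * \<alpha> * \<xi>))))"

end

theory Submission
  imports Defs "HOL-Computational_Algebra.Computational_Algebra" "HOL-Computational_Algebra.Field_as_Ring"
begin

lemma mp_add: "map_poly (of_real::real\<Rightarrow>complex) (p + q) = map_poly of_real p + map_poly of_real q"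
  by (rule poly_eqI) (simp add: coeff_map_poly)
lemma mp_diff: "map_poly (of_real::real\<Rightarrow>complex) (p - q) = map_poly of_real p - map_poly of_real q"
  by (rule poly_eqI) (simp add: coeff_map_poly)
lemma mp_mult: "map_poly (of_real::real\<Rightarrow>complex) (p * q) = map_poly of_real p * map_poly of_real q"
  by (rule poly_eqI) (simp add: coeff_map_poly coeff_mult)
lemma mp_smult: "map_poly (of_real::real\<Rightarrow>complex) (smult c p) = smult (of_real c) (map_poly of_real p)"
  by (rule poly_eqI) (simp add: coeff_map_poly)
lemma mp_pderiv: "map_poly (of_real::real\<Rightarrow>complex) (pderiv p) = pderiv (map_poly of_real p)"
  by (rule poly_eqI) (simp add: coeff_map_poly coeff_pderiv)
lemma mp_pCons: "map_poly (of_real::real\<Rightarrow>complex) (pCons a p) = pCons (of_real a) (map_poly of_real p)"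
  by (simp add: map_poly_pCons)
lemma mp_poly: "poly (map_poly (of_real::real\<Rightarrow>complex) p) (of_real x) = of_real (poly p x)"
  by (induction p) (auto simp: map_poly_pCons)

lemma re_pos:
  fixes \<rho> :: complex and g h :: real
  assumes "g > 0" "h > 0" "of_real g * \<rho>^2 - \<rho> + of_real (2*h) = 0"
  shows "Re \<rho> > 0"
proof -
  have "\<rho> \<noteq> 0" using assms by auto
  hence "of_real g * \<rho> + of_real (2*h) / \<rho> = 1" using assms(3)
    by (simp add: field_simps power2_eq_square)
  hence "Re (of_real g * \<rho> + of_real (2*h) / \<rho>) = 1" by simp
  hence "g * Re \<rho> + 2*h * Re \<rho> / (Re \<rho>^2 + Im \<rho>^2) = 1"
    by (simp add: Re_divide power2_eq_square)
  hence "Re \<rho> * (g + 2*h / (Re \<rho>^2 + Im \<rho>^2)) = 1" by (simp add: algebra_simps)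
  moreover have "g + 2*h / (Re \<rho>^2 + Im \<rho>^2) > 0" using assms by (simp add: add_pos_nonneg)
  ultimately show ?thesis by (metis zero_less_mult_pos2 zero_less_one)
qed

lemma lagrange_sum:
  fixes S :: "'a::field set" and F :: "'a poly"
  assumes fin: "finite S" and dg: "degree F + 2 \<le> card S"
  shows "(\<Sum>z\<in>S. poly F z / (\<Prod>w\<in>S-{z}. (z - w))) = 0"
proof -
  define M where "M z = (\<Prod>w\<in>S-{z}. [:-w,1::'a:])" for z
  define L where "L = (\<Sum>z\<in>S. smult (poly F z / (\<Prod>w\<in>S-{z}. (z - w))) (M z))"
  have degM: "degree (M z) = card S - 1" if "z \<in> S" for z
    unfolding M_def using that fin by (subst degree_prod_sum_eq) auto
  have lcM: "coeff (M z) (card S - 1) = 1" if "z \<in> S" for z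
  proof -
    have "lead_coeff (M z) = 1" unfolding M_def by (simp add: lead_coeff_prod)
    thus ?thesis using degM[OF that] by simp
  qed
  have degL: "degree L \<le> card S - 1"
    unfolding L_def by (rule degree_sum_le) (use fin degM in \<open>auto intro: order.trans[OF degree_smult_le]\<close>)
  have evalL: "poly L v = poly F v" if v: "v \<in> S" for v
  proof -
    have "poly L v = (\<Sum>z\<in>S. poly F z / (\<Prod>w\<in>S-{z}. (z - w)) * (\<Prod>w\<in>S-{z}. (v - w)))"
      unfolding L_def M_def by (simp add: poly_sum poly_prod)
    also have "\<dots> = poly F v / (\<Prod>w\<in>S-{v}. (v - w)) * (\<Prod>w\<in>S-{v}. (v - w))
        + (\<Sum>z\<in>S-{v}. poly F z / (\<Prod>w\<in>S-{z}. (z - w)) * (\<Prod>w\<in>S-{z}. (v - w)))"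
      using fin v by (simp add: sum.remove)
    also have "(\<Sum>z\<in>S-{v}. poly F z / (\<Prod>w\<in>S-{z}. (z - w)) * (\<Prod>w\<in>S-{z}. (v - w))) = 0"
    proof (rule sum.neutral, intro ballI)
      fix z assume "z \<in> S - {v}"
      hence "(\<Prod>w\<in>S-{z}. (v - w)) = 0" using fin v by (intro prod_zero) auto
      thus "poly F z / (\<Prod>w\<in>S-{z}. (z - w)) * (\<Prod>w\<in>S-{z}. (v - w)) = 0" by simp
    qed
    finally have *: "poly L v = poly F v / (\<Prod>w\<in>S-{v}. (v - w)) * (\<Prod>w\<in>S-{v}. (v - w)) + 0" .
    have "(\<Prod>w\<in>S-{v}. (v - w)) \<noteq> 0" using fin by (subst prod_zero_iff) auto
    with * show ?thesis by simp
  qed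
  have LF: "L - F = 0"
  proof (rule ccontr)
    assume ne: "L - F \<noteq> 0"
    have "S \<subseteq> {x. poly (L - F) x = 0}" using evalL by auto
    hence "card S \<le> card {x. poly (L - F) x = 0}" using poly_roots_finite[OF ne] by (rule card_mono[rotated])
    also have "\<dots> \<le> degree (L - F)" using card_poly_roots_bound[OF ne] .
    also have "\<dots> \<le> max (degree L) (degree F)" by (rule degree_diff_le_max)
    also have "\<dots> \<le> card S - 1" using degL dg by auto
    finally show False using dg by linarith
  qed
  have "coeff L (card S - 1) = coeff F (card S - 1)" using LF by (metis eq_iff_diff_eq_0)
  also have "\<dots> = 0" using dg by (intro coeff_eq_0) linarith
  finally have "coeff L (card S - 1) = 0" .
  moreover have "coeff L (card S - 1) = (\<Sum>z\<in>S. poly F z / (\<Prod>w\<in>S-{z}. (z - w)))"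
    unfolding L_def coeff_sum coeff_smult by (intro sum.cong refl) (simp add: lcM[simplified])
  ultimately show ?thesis by simp
qed

lemma core:
  fixes A B s t :: "complex poly" and h \<alpha> \<gamma> :: real
  assumes bez: "s*A + t*B = 1" and A0: "poly A 0 = 0" and Anz: "A \<noteq> 0"
    and dAB: "degree A < degree B" and al: "\<alpha> \<noteq> 0" and hp: "h > 0" and gp: "\<gamma> > 0"
    and root: "\<And>z. poly B z = 0 \<Longrightarrow> poly A z * (of_real \<gamma> * (poly A z)^2
        - of_real \<alpha> * z * poly A z * poly (pderiv B) z
        + of_real (2*h*\<alpha>^2) * z^2 * (poly (pderiv B) z)^2) = 0"
  shows False
proof -
  have Anz_root: "poly A z \<noteq> 0" if "poly B z = 0" for z
  proof
    assume "poly A z = 0"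
    have "poly (s*A + t*B) z = 1" using bez by simp
    thus False using that \<open>poly A z = 0\<close> by simp
  qed
  have B0: "poly B 0 \<noteq> 0" using Anz_root A0 by auto
  have Bnz: "B \<noteq> 0" using B0 by auto
  define D where "D z = poly (pderiv B) z" for z
  have K: "of_real \<gamma> * (poly A z)^2 - of_real \<alpha> * z * poly A z * D z
        + of_real (2*h*\<alpha>^2) * z^2 * (D z)^2 = 0" if "poly B z = 0" for z
    using root[OF that] Anz_root[OF that] unfolding D_def by simp
  have Dnz: "D z \<noteq> 0" if "poly B z = 0" for z
  proof
    assume "D z = 0"
    hence "of_real \<gamma> * (poly A z)^2 = 0" using K[OF that] by simp
    thus False using gp Anz_root[OF that] by simp
  qed
  have znz: "z \<noteq> 0" if "poly B z = 0" for z using that B0 by auto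
  have sqf: "rsquarefree B" unfolding rsquarefree_roots using Dnz unfolding D_def by auto
  define S where "S = {z. poly B z = 0}"
  have finS: "finite S" unfolding S_def using poly_roots_finite[OF Bnz] .
  define l where "l = lead_coeff B"
  have lnz: "l \<noteq> 0" unfolding l_def using Bnz by simp
  have dec: "smult l (\<Prod>z\<in>S. [:-z, 1:]) = B"
    unfolding l_def S_def using complex_poly_decompose_rsquarefree[OF sqf] by simp
  have degB: "degree B = card S"
    using arg_cong[OF dec, of degree] lnz finS by (simp add: degree_prod_sum_eq)
  have Dval: "D z = l * (\<Prod>w\<in>S-{z}. (z - w))" if "z \<in> S" for z
  proof -
    have "B = smult l ([:-z,1:] * (\<Prod>w\<in>S-{z}. [:-w, 1:]))"
      using dec[symmetric] finS that by (simp add: prod.remove)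
    hence "D z = poly (pderiv (smult l ([:-z,1:] * (\<Prod>w\<in>S-{z}. [:-w, 1:])))) z"
      unfolding D_def by simp
    also have "\<dots> = l * (\<Prod>w\<in>S-{z}. (z - w))"
      by (simp only: pderiv_smult pderiv_mult) (simp add: pderiv_pCons poly_prod)
    finally show ?thesis .
  qed
  obtain A1 where A1: "A = [:0,1:] * A1"
    using A0 by (metis add.inverse_neutral poly_eq_0_iff_dvd dvdE)
  have A1nz: "A1 \<noteq> 0" using Anz A1 by auto
  have degA1: "degree A = degree A1 + 1" using A1 A1nz by (simp add: degree_mult_eq)
  define \<rho> where "\<rho> z = poly A z / (of_real \<alpha> * z * D z)" for z
  have \<rho>eq: "\<rho> z = poly A1 z / (of_real \<alpha> * l) / (\<Prod>w\<in>S-{z}. (z - w))" if "z \<in> S" for z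
    using that znz[of z] unfolding \<rho>_def Dval[OF that] A1 S_def by (simp add: field_simps)
  have "(\<Sum>z\<in>S. \<rho> z) = (\<Sum>z\<in>S. poly A1 z / (\<Prod>w\<in>S-{z}. (z - w))) / (of_real \<alpha> * l)"
    by (simp add: \<rho>eq sum_divide_distrib field_simps cong: sum.cong)
  also have "(\<Sum>z\<in>S. poly A1 z / (\<Prod>w\<in>S-{z}. (z - w))) = 0"
    by (rule lagrange_sum[OF finS]) (use degA1 degB dAB in linarith)
  finally have sum0: "(\<Sum>z\<in>S. \<rho> z) = 0" by simp
  have rpos: "Re (\<rho> z) > 0" if "z \<in> S" for z
  proof (rule re_pos[OF gp hp])
    have bz: "poly B z = 0" using that S_def by simp
    have nz: "of_real \<alpha> * z * D z \<noteq> 0" using al znz[OF bz] Dnz[OF bz] by simp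
    have "poly A z = \<rho> z * (of_real \<alpha> * z * D z)" unfolding \<rho>_def using nz by simp
    hence "(of_real \<gamma> * (\<rho> z)^2 - \<rho> z + of_real (2*h)) * (of_real \<alpha> * z * D z)^2 = 0"
      using K[OF bz] by (simp add: algebra_simps power2_eq_square)
    thus "of_real \<gamma> * (\<rho> z)^2 - \<rho> z + of_real (2*h) = 0" using nz by simp
  qed
  have "S \<noteq> {}" using degB dAB by auto
  hence "Re (\<Sum>z\<in>S. \<rho> z) > 0" using finS rpos by (simp add: sum_pos)
  with sum0 show False by simp
qed

lemma deg_from_lim:
  fixes P Q :: "real poly"
  assumes lim: "((\<lambda>y. poly P y / poly Q y) \<longlongrightarrow> 0) at_top" and Pnz: "P \<noteq> 0" and Qnz: "Q \<noteq> 0"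
  shows "degree P < degree Q"
proof (rule ccontr)
  assume "\<not> degree P < degree Q"
  hence le: "degree Q \<le> degree P" by simp
  define d where "d = degree P"
  define k where "k = d - degree Q"
  have lP: "((\<lambda>x. poly P x/x^d) \<longlongrightarrow> lead_coeff P) at_top"
    unfolding d_def using poly_divide_tendsto_aux[of P] at_top_le_at_infinity tendsto_mono by blast
  have lQ0: "((\<lambda>x. poly Q x/x^(degree Q)) \<longlongrightarrow> lead_coeff Q) at_top"
    using poly_divide_tendsto_aux[of Q] at_top_le_at_infinity tendsto_mono by blast
  have inv: "((\<lambda>x::real. (inverse x)^k) \<longlongrightarrow> 0^k) at_top"
    by (intro tendsto_power tendsto_inverse_0_at_top filterlim_ident)
  have lQ: "((\<lambda>x. poly Q x/x^(degree Q) * (inverse x)^k) \<longlongrightarrow> lead_coeff Q * 0^k) at_top"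
    by (rule tendsto_mult[OF lQ0 inv])
  have evQ: "eventually (\<lambda>x. poly Q x/x^(degree Q) \<noteq> 0) at_top"
    using tendsto_imp_eventually_ne[OF lQ0, of 0] Qnz by simp
  have lprod: "((\<lambda>x. poly P x / poly Q x * (poly Q x/x^(degree Q) * (inverse x)^k)) \<longlongrightarrow> 0 * (lead_coeff Q * 0^k)) at_top"
    by (rule tendsto_mult[OF lim lQ])
  have ev: "eventually (\<lambda>x. poly P x / poly Q x * (poly Q x/x^(degree Q) * (inverse x)^k) = poly P x/x^d) at_top"
    using evQ eventually_gt_at_top[of 0]
  proof eventually_elim
    case (elim x)
    hence "poly Q x \<noteq> 0" by auto
    moreover have "x^(degree Q) * x^k = x^d" unfolding k_def using le d_def by (simp add: power_add[symmetric])
    ultimately show ?case using elim by (simp add: field_simps power_inverse)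
  qed
  have "((\<lambda>x. poly P x/x^d) \<longlongrightarrow> 0) at_top"
    using tendsto_cong[OF ev] lprod by simp
  hence "lead_coeff P = 0" using lP tendsto_unique by (metis trivial_limit_at_top_linorder)
  thus False using Pnz by simp
qed

lemma pde_ode:
  assumes d1: "\<And>z. (U has_real_derivative U1 z) (at z)"
    and d2: "\<And>z. (U1 has_real_derivative U2 z) (at z)"
    and pde: "gen_burgers_pde \<tau> \<kappa> \<gamma> z0 (\<lambda>x t. U (x + \<mu> * t))"
  shows "\<tau> * \<mu>^2 * U2 \<xi> + U \<xi> * U1 \<xi> + \<mu> * U1 \<xi> - \<kappa> * U2 \<xi> + \<gamma> * U \<xi> * ((U \<xi>)^2 - z0^2) = 0"
proof -
  have lin1: "((\<lambda>r. x + \<mu> * r) has_real_derivative \<mu>) (at s)" for x s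
    by (auto intro!: derivative_eq_intros)
  have lin2: "((\<lambda>y. y + \<mu> * t) has_real_derivative 1) (at s)" for t s
    by (auto intro!: derivative_eq_intros)
  have t1: "deriv (\<lambda>r. U (x + \<mu> * r)) s = U1 (x + \<mu> * s) * \<mu>" for x s
    by (rule DERIV_imp_deriv, rule DERIV_chain2[OF d1 lin1])
  have t2: "deriv (\<lambda>s. U1 (x + \<mu> * s) * \<mu>) t = U2 (x + \<mu> * t) * \<mu> * \<mu>" for x t
    by (rule DERIV_imp_deriv, rule DERIV_cmult_right[OF DERIV_chain2[OF d2 lin1]])
  have x1: "deriv (\<lambda>y. U (y + \<mu> * t)) x = U1 (x + \<mu> * t)" for x t
    using DERIV_imp_deriv[OF DERIV_chain2[OF d1 lin2]] by simp
  have x2: "deriv (\<lambda>y. U1 (y + \<mu> * t)) x = U2 (x + \<mu> * t)" for x t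
    using DERIV_imp_deriv[OF DERIV_chain2[OF d2 lin2]] by simp
  have "\<tau> * deriv (\<lambda>s. deriv (\<lambda>r. U (\<xi> + \<mu> * r)) s) 0
      + U (\<xi> + \<mu> * 0) * deriv (\<lambda>y. U (y + \<mu> * 0)) \<xi>
      + deriv (\<lambda>s. U (\<xi> + \<mu> * s)) 0
      - \<kappa> * deriv (\<lambda>y. deriv (\<lambda>z. U (z + \<mu> * 0)) y) \<xi>
      + \<gamma> * U (\<xi> + \<mu> * 0) * ((U (\<xi> + \<mu> * 0))\<^sup>2 - z0\<^sup>2) = 0"
    using pde unfolding gen_burgers_pde_def by blast
  thus ?thesis unfolding t1 x1 t2 x2 by (simp add: power2_eq_square algebra_simps)
qed

lemma poly_chain [derivative_intros]:
  "(f has_real_derivative f') (at x) \<Longrightarrow> ((\<lambda>x. poly p (f x)) has_real_derivative poly (pderiv p) (f x) * f') (at x)"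
  by (rule DERIV_chain2[OF poly_DERIV])

lemma rat_deriv1:
  fixes P Q :: "real poly" and \<alpha> :: real
  assumes Qnz: "\<And>y. y > 0 \<Longrightarrow> poly Q y \<noteq> 0"
  shows "((\<lambda>\<xi>. poly P (exp (\<alpha>*\<xi>)) / poly Q (exp (\<alpha>*\<xi>))) has_real_derivative
     \<alpha> * poly ([:0,1:] * (pderiv P * Q - P * pderiv Q)) (exp (\<alpha>*\<xi>)) / (poly Q (exp (\<alpha>*\<xi>)))^2) (at \<xi>)"
proof -
  have q: "poly Q (exp (\<alpha>*\<xi>)) \<noteq> 0" using Qnz by simp
  have e: "((\<lambda>\<xi>. exp (\<alpha>*\<xi>)) has_real_derivative exp (\<alpha>*\<xi>) * \<alpha>) (at \<xi>)"
    by (rule DERIV_chain2[OF DERIV_exp DERIV_cmult_Id])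
  show ?thesis
    by (rule DERIV_cong[OF DERIV_divide[OF poly_chain[OF e] poly_chain[OF e] q]])
       (use q in \<open>simp add: field_simps power2_eq_square\<close>)
qed

lemma rat_deriv2:
  fixes N Q :: "real poly" and \<alpha> :: real
  assumes Qnz: "\<And>y. y > 0 \<Longrightarrow> poly Q y \<noteq> 0"
  shows "((\<lambda>\<xi>. \<alpha> * poly N (exp (\<alpha>*\<xi>)) / (poly Q (exp (\<alpha>*\<xi>)))^2) has_real_derivative
     \<alpha>^2 * poly ([:0,1:] * (pderiv N * Q - smult 2 (N * pderiv Q))) (exp (\<alpha>*\<xi>)) / (poly Q (exp (\<alpha>*\<xi>)))^3) (at \<xi>)"
proof -
  have q: "poly Q (exp (\<alpha>*\<xi>)) \<noteq> 0" using Qnz by simp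
  have e: "((\<lambda>\<xi>. exp (\<alpha>*\<xi>)) has_real_derivative exp (\<alpha>*\<xi>) * \<alpha>) (at \<xi>)"
    by (rule DERIV_chain2[OF DERIV_exp DERIV_cmult_Id])
  have q2: "(poly Q (exp (\<alpha>*\<xi>)))^2 \<noteq> 0" using q by simp
  show ?thesis
    by (rule DERIV_cong[OF DERIV_divide[OF DERIV_cmult[OF poly_chain[OF e]] DERIV_power[OF poly_chain[OF e]] q2]])
       (use q in \<open>simp add: field_simps power2_eq_square power3_eq_cube\<close>)
qed

theorem lemma1:
  fixes \<tau> \<kappa> \<gamma> z0 \<mu> :: real and U :: "real \<Rightarrow> real" and m :: nat
  assumes "\<tau> * \<mu>\<^sup>2 - \<kappa> > 0" and "\<gamma> > 0" and "z0 \<noteq> 0"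
    and "solitary_wave \<tau> \<kappa> \<gamma> z0 \<mu> U"
  shows "\<not> rational_exp_form m U"
proof
  assume "rational_exp_form m U"
  then obtain a b :: "nat \<Rightarrow> real" and \<alpha> :: real where rep: "\<forall>\<xi>.
        1 + (\<Sum>r=1..m+1. b r * exp (real r * \<alpha> * \<xi>)) \<noteq> 0 \<and>
        U \<xi> = (\<Sum>k=1..m. a k * exp (real k * \<alpha> * \<xi>)) /
               (1 + (\<Sum>r=1..m+1. b r * exp (real r * \<alpha> * \<xi>)))"
    unfolding rational_exp_form_def by blast
  have tw: "travelling_wave_solution \<tau> \<kappa> \<gamma> z0 \<mu> U" and limt: "(U \<longlongrightarrow> 0) at_top"
    and limb: "(U \<longlongrightarrow> 0) at_bot" and nz: "\<exists>\<xi>. U \<xi> \<noteq> 0"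
    using assms(4) unfolding solitary_wave_def by auto
  have pde: "gen_burgers_pde \<tau> \<kappa> \<gamma> z0 (\<lambda>x t. U (x + \<mu> * t))"
    using tw unfolding travelling_wave_solution_def by auto
  obtain \<xi>0 where x0: "U \<xi>0 \<noteq> 0" using nz by blast
  define P :: "real poly" where "P = (\<Sum>k=1..m. monom (a k) k)"
  define Q :: "real poly" where "Q = 1 + (\<Sum>r=1..m+1. monom (b r) r)"
  have ek: "exp (real k * \<alpha> * \<xi>) = exp (\<alpha>*\<xi>)^k" for k \<xi>
    by (metis exp_of_nat_mult mult.assoc)
  have eP: "(\<Sum>k=1..m. a k * exp (real k * \<alpha> * \<xi>)) = poly P (exp (\<alpha>*\<xi>))" for \<xi>
    unfolding P_def ek by (simp add: poly_sum poly_monom)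
  have eQ: "1 + (\<Sum>r=1..m+1. b r * exp (real r * \<alpha> * \<xi>)) = poly Q (exp (\<alpha>*\<xi>))" for \<xi>
    unfolding Q_def ek by (simp add: poly_sum poly_monom)
  have Uf: "U \<xi> = poly P (exp (\<alpha>*\<xi>)) / poly Q (exp (\<alpha>*\<xi>))" for \<xi>
    using rep eP eQ by metis
  have Qe: "poly Q (exp (\<alpha>*\<xi>)) \<noteq> 0" for \<xi>
    using rep eQ by metis
  have P0: "poly P 0 = 0" unfolding P_def by (simp add: poly_sum poly_monom)
  have Q0: "poly Q 0 = 1" unfolding Q_def by (simp add: poly_sum poly_monom)
  show False
  proof (cases "\<alpha> = 0")
    case True
    hence "U = (\<lambda>_. poly P 1 / poly Q 1)" using Uf by auto
    with limt have "poly P 1 / poly Q 1 = 0" by (simp add: tendsto_const_iff)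
    with x0 \<open>U = _\<close> show False by simp
  next
    case al: False
    define h where "h = \<tau> * \<mu>\<^sup>2 - \<kappa>"
    have hp: "h > 0" using assms(1) h_def by simp
    have yexp: "exp (\<alpha> * (inverse \<alpha> * ln y)) = y" if "y > 0" for y
      using al that by (simp flip: mult.assoc)
    have Qpos: "poly Q y \<noteq> 0" if "y > 0" for y
      using Qe[of "inverse \<alpha> * ln y"] yexp[OF that] by simp
    have Qnz: "Q \<noteq> 0" using Q0 by auto
    define G where "G = gcd P Q"
    define P1 where "P1 = P div G"
    define Q1 where "Q1 = Q div G"
    have cop: "coprime P1 Q1" unfolding P1_def Q1_def G_def by (rule div_gcd_coprime) (use Qnz in auto)
    have PG: "P = P1 * G" unfolding P1_def G_def by simp
    have QG: "Q = Q1 * G" unfolding Q1_def G_def by simp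
    have Q1pos: "poly Q1 y \<noteq> 0" and Gpos: "poly G y \<noteq> 0" if "y > 0" for y
      using Qpos[OF that] unfolding QG by auto
    have G0: "poly G 0 \<noteq> 0" using Q0 unfolding QG by auto
    have P10: "poly P1 0 = 0" using P0 G0 unfolding PG by simp
    have Uf1: "U \<xi> = poly P1 (exp (\<alpha>*\<xi>)) / poly Q1 (exp (\<alpha>*\<xi>))" for \<xi>
      using Uf[of \<xi>] Gpos[of "exp (\<alpha>*\<xi>)"] unfolding PG QG by simp
    have Ufun: "U = (\<lambda>\<xi>. poly P1 (exp (\<alpha>*\<xi>)) / poly Q1 (exp (\<alpha>*\<xi>)))"
      using Uf1 by auto
    have P1nz: "P1 \<noteq> 0" using x0 Uf1[of \<xi>0] by auto
    have Q1nz: "Q1 \<noteq> 0" using Q1pos[of 1] by auto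
    have lnlim: "filterlim (\<lambda>y. inverse \<alpha> * ln y) (if \<alpha> > 0 then at_top else at_bot) at_top"
    proof (cases "\<alpha> > 0")
      case True
      thus ?thesis using filterlim_tendsto_pos_mult_at_top[OF tendsto_const[of "inverse \<alpha>"] _ ln_at_top] by simp
    next
      case False
      hence "inverse \<alpha> < 0" using al by simp
      thus ?thesis using False filterlim_tendsto_neg_mult_at_bot[OF tendsto_const[of "inverse \<alpha>"] _ ln_at_top] by simp
    qed
    have "(U \<longlongrightarrow> 0) (if \<alpha> > 0 then at_top else at_bot)" using limt limb by simp
    hence "((\<lambda>y. U (inverse \<alpha> * ln y)) \<longlongrightarrow> 0) at_top"
      by (rule filterlim_compose[OF _ lnlim])
    moreover have "eventually (\<lambda>y. U (inverse \<alpha> * ln y) = poly P1 y / poly Q1 y) at_top"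
      using eventually_gt_at_top[of 0] by eventually_elim (simp add: Uf1 yexp)
    ultimately have lim: "((\<lambda>y. poly P1 y / poly Q1 y) \<longlongrightarrow> 0) at_top"
      using tendsto_cong by fastforce
    have dPQ: "degree P1 < degree Q1" by (rule deg_from_lim[OF lim P1nz Q1nz])
    define N where "N = [:0,1:] * (pderiv P1 * Q1 - P1 * pderiv Q1)"
    define M where "M = [:0,1:] * (pderiv N * Q1 - smult 2 (N * pderiv Q1))"
    define U1 where "U1 \<xi> = \<alpha> * poly N (exp (\<alpha>*\<xi>)) / (poly Q1 (exp (\<alpha>*\<xi>)))^2" for \<xi>
    define U2 where "U2 \<xi> = \<alpha>^2 * poly M (exp (\<alpha>*\<xi>)) / (poly Q1 (exp (\<alpha>*\<xi>)))^3" for \<xi>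
    have d1: "(U has_real_derivative U1 z) (at z)" for z
      unfolding Ufun U1_def N_def by (rule rat_deriv1) (use Q1pos in auto)
    have d2: "(U1 has_real_derivative U2 z) (at z)" for z
      unfolding U1_def U2_def M_def by (rule rat_deriv2[of Q1]) (use Q1pos in auto)
    have ode: "\<tau> * \<mu>^2 * U2 \<xi> + U \<xi> * U1 \<xi> + \<mu> * U1 \<xi> - \<kappa> * U2 \<xi> + \<gamma> * U \<xi> * ((U \<xi>)^2 - z0^2) = 0" for \<xi>
      by (rule pde_ode[OF d1 d2 pde])
    define E where "E = smult (h*\<alpha>^2) M + smult \<alpha> ((smult \<mu> Q1 + P1) * N) + smult \<gamma> (P1 * (P1^2 - smult (z0^2) (Q1^2)))"
    have Ey: "poly E y = 0" if y: "y > 0" for y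
    proof -
      define \<xi> where "\<xi> = inverse \<alpha> * ln y"
      have ey: "exp (\<alpha>*\<xi>) = y" unfolding \<xi>_def using yexp[OF y] .
      have q: "poly Q1 y \<noteq> 0" using Q1pos[OF y] .
      have "poly E y = (poly Q1 y)^3 * (\<tau> * \<mu>^2 * U2 \<xi> + U \<xi> * U1 \<xi> + \<mu> * U1 \<xi> - \<kappa> * U2 \<xi> + \<gamma> * U \<xi> * ((U \<xi>)^2 - z0^2))"
        unfolding U1_def U2_def Uf1 ey E_def h_def using q
        by (simp add: field_simps power2_eq_square power3_eq_cube)
      thus ?thesis using ode[of \<xi>] by simp
    qed
    have E0: "E = 0"
    proof (rule ccontr)
      assume "E \<noteq> 0"
      hence "finite {y. poly E y = 0}" by (rule poly_roots_finite)
      moreover have "{0<..} \<subseteq> {y. poly E y = 0}" using Ey by auto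
      ultimately show False using infinite_Ioi[of "0::real"] finite_subset by blast
    qed
    define A where "A = map_poly (of_real :: real \<Rightarrow> complex) P1"
    define B where "B = map_poly (of_real :: real \<Rightarrow> complex) Q1"
    obtain s t where st: "s * P1 + t * Q1 = 1"
      using bezout_coefficients_fst_snd[of P1 Q1] cop by (metis coprime_imp_gcd_eq_1)
    have bez: "map_poly of_real s * A + map_poly of_real t * B = 1"
      using arg_cong[OF st, of "map_poly (of_real :: real \<Rightarrow> complex)"]
      unfolding A_def B_def by (simp add: mp_add mp_mult)
    have A0: "poly A 0 = 0" using mp_poly[of P1 0] P10 unfolding A_def by simp
    have Anz: "A \<noteq> 0" unfolding A_def using P1nz by (simp add: map_poly_eq_0_iff)
    have dAB: "degree A < degree B" unfolding A_def B_def using dPQ by (simp add: degree_map_poly)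
    have EC: "map_poly (of_real :: real \<Rightarrow> complex) E = 0" using E0 by simp
    have root: "poly A z * (of_real \<gamma> * (poly A z)^2
        - of_real \<alpha> * z * poly A z * poly (pderiv B) z
        + of_real (2*h*\<alpha>^2) * z^2 * (poly (pderiv B) z)^2) = 0" if bz: "poly B z = 0" for z
    proof -
      have "poly (map_poly (of_real :: real \<Rightarrow> complex) E) z = 0" using EC by simp
      hence "poly (smult (of_real (h*\<alpha>^2)) ([:0,1:] * (pderiv ([:0,1:] * (pderiv A * B - A * pderiv B)) * B - smult 2 (([:0,1:] * (pderiv A * B - A * pderiv B)) * pderiv B)))
           + smult (of_real \<alpha>) ((smult (of_real \<mu>) B + A) * ([:0,1:] * (pderiv A * B - A * pderiv B)))
           + smult (of_real \<gamma>) (A * (A^2 - smult (of_real (z0^2)) (B^2)))) z = 0"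
        unfolding E_def M_def N_def A_def B_def
        by (simp only: mp_add mp_diff mp_mult mp_smult mp_pderiv mp_pCons power2_eq_square map_poly_0 of_real_0 of_real_1 map_poly_1' of_real_numeral)
      thus ?thesis using bz by (simp add: algebra_simps power2_eq_square power3_eq_cube)
    qed
    show False by (rule core[OF bez A0 Anz dAB al hp assms(2) root])
  qed
qed

end
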